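(* There exist infinitely many pairs $(n_1,n_2)$ of positive integers for each of which there are NFAs $A$ and $B$ over a binary alphabet, with $n_1$ and $n_2$ states respectively, such that there is no infinite tower of prefixes between $L(A)$ and $L(B)$ and there is a tower of prefixes between $L(A)$ and $L(B)$ whose height is superpolynomial in $n_1+n_2$ (that is, along this family the height is not bounded by any polynomial in $n_1+n_2$).
   Context: A string $v$ is a prefix of $w$, written $v\le w$, if $w=vu$ for some string $u$. A sequence $(w_i)_{i=1}^r$ of strings is a tower of prefixes between languages $K$ and $L$ if $w_1\in K\cup L$ and for all $i=1,\dots,r-1$: $w_i\le w_{i+1}$, $w_i\in K$ implies $w_{i+1}\in L$, and $w_i\in L$ implies $w_{i+1}\in K$; $r$ is its height. An infinite tower of prefixes is an infinite sequence with the same properties. *)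

theory Defs
  imports Main "HOL-Library.Sublist"
begin

record nfa =
  states :: "nat set"
  init   :: "nat set"
  fin    :: "nat set"
  trans  :: "(nat \<times> bool \<times> nat) set"

definition wf_nfa :: "nfa \<Rightarrow> bool" where
  "wf_nfa A \<longleftrightarrow> finite (states A) \<and> init A \<subseteq> states A \<and> fin A \<subseteq> states A
     \<and> trans A \<subseteq> states A \<times> UNIV \<times> states A"

fun delta_star :: "nfa \<Rightarrow> nat set \<Rightarrow> bool list \<Rightarrow> nat set" where
  "delta_star A S [] = S"
| "delta_star A S (a # w) = delta_star A {q'. \<exists>q\<in>S. (q, a, q') \<in> trans A} w"

definition lang :: "nfa \<Rightarrow> bool list set" where
  "lang A = {w. delta_star A (init A) w \<inter> fin A \<noteq> {}}"

text \<open>A (finite) tower of prefixes between K and L, given as the list w_1..w_r; its height is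
  the length of the list.\<close>

definition tower :: "'a list set \<Rightarrow> 'a list set \<Rightarrow> 'a list list \<Rightarrow> bool" where
  "tower K L ws \<longleftrightarrow> ws \<noteq> [] \<and> hd ws \<in> K \<union> L \<and>
     (\<forall>i. Suc i < length ws \<longrightarrow>
        prefix (ws ! i) (ws ! Suc i) \<and>
        (ws ! i \<in> K \<longrightarrow> ws ! Suc i \<in> L) \<and>
        (ws ! i \<in> L \<longrightarrow> ws ! Suc i \<in> K))"

definition infinite_tower :: "'a list set \<Rightarrow> 'a list set \<Rightarrow> (nat \<Rightarrow> 'a list) \<Rightarrow> bool" where
  "infinite_tower K L w \<longleftrightarrow> w 0 \<in> K \<union> L \<and>
     (\<forall>i. prefix (w i) (w (Suc i)) \<and>
        (w i \<in> K \<longrightarrow> w (Suc i) \<in> L) \<and>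
        (w i \<in> L \<longrightarrow> w (Suc i) \<in> K))"

end

theory Submission
  imports Defs
begin


definition acc :: "nfa \<Rightarrow> nat \<Rightarrow> bool list \<Rightarrow> bool" where
  "acc A q w \<longleftrightarrow> delta_star A {q} w \<inter> fin A \<noteq> {}"

lemma ds_union: "delta_star A S w = (\<Union>q\<in>S. delta_star A {q} w)"
proof (induction w arbitrary: S)
  case Nil then show ?case by auto
next
  case (Cons a w)
  define X where "X = {q'. \<exists>q\<in>S. (q, a, q') \<in> trans A}"
  have "delta_star A S (a#w) = delta_star A X w" by (simp add: X_def)
  also have "\<dots> = (\<Union>q'\<in>X. delta_star A {q'} w)" by (rule Cons.IH)
  also have "\<dots> = (\<Union>q\<in>S. (\<Union>q'\<in>{q'. (q, a, q') \<in> trans A}. delta_star A {q'} w))"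
    unfolding X_def by blast
  also have "\<dots> = (\<Union>q\<in>S. delta_star A {q'. (q, a, q') \<in> trans A} w)"
    using Cons.IH[symmetric] by presburger
  also have "\<dots> = (\<Union>q\<in>S. delta_star A {q} (a#w))" by simp
  finally show ?case .
qed

lemma lang_acc: "w \<in> lang A \<longleftrightarrow> (\<exists>q\<in>init A. acc A q w)"
  unfolding lang_def acc_def by (subst ds_union) auto

lemma acc_Nil: "acc A q [] \<longleftrightarrow> q \<in> fin A"
  unfolding acc_def by auto

lemma acc_Cons: "acc A q (a#w) \<longleftrightarrow> (\<exists>p. (q,a,p) \<in> trans A \<and> acc A p w)"
  unfolding acc_def by (subst delta_star.simps, subst ds_union) auto

definition sg :: "nat \<Rightarrow> nat \<Rightarrow> nat \<Rightarrow> nat" where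
  "sg n j c = 2 + j*n + c"

lemma sg_inj: "sg n j c = sg n j' c' \<Longrightarrow> c < n \<Longrightarrow> c' < n \<Longrightarrow> j = j' \<and> c = c'"
proof -
  assume h: "sg n j c = sg n j' c'" "c < n" "c' < n"
  then have e: "j*n + c = j'*n + c'" by (simp add: sg_def)
  have "(j*n + c) div n = j" using h(2) by simp
  moreover have "(j'*n + c') div n = j'" using h(3) by simp
  ultimately have "j = j'" using e by simp
  then show ?thesis using e by simp
qed

definition T :: "nat \<Rightarrow> (nat \<times> bool \<times> nat) set" where
  "T n = {(sg n j c, True, sg n j (Suc c)) | j c. j < n \<and> c < j}
       \<union> {(sg n j c, False, sg n j 0) | j c. j < n \<and> c < j}
       \<union> {(sg n j j, False, sg n j' 0) | j j'. j < n \<and> j' < j}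
       \<union> {(sg n j j, False, 0) | j. 0 < j \<and> j < n}
       \<union> (if 0 < n then {(sg n 0 0, False, 1)} else {})"

lemma T_in1: "j<n \<Longrightarrow> c<j \<Longrightarrow> (sg n j c, True, sg n j (Suc c)) \<in> T n"
  unfolding T_def apply (rule UnI1)+ by auto
lemma T_in2: "j<n \<Longrightarrow> c<j \<Longrightarrow> (sg n j c, False, sg n j 0) \<in> T n"
  unfolding T_def apply (rule UnI1, rule UnI1, rule UnI1, rule UnI2) by auto
lemma T_in3: "j<n \<Longrightarrow> j'<j \<Longrightarrow> (sg n j j, False, sg n j' 0) \<in> T n"
  unfolding T_def apply (rule UnI1, rule UnI1, rule UnI2) by auto
lemma T_in4: "j<n \<Longrightarrow> 0<j \<Longrightarrow> (sg n j j, False, 0) \<in> T n"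
  unfolding T_def apply (rule UnI1, rule UnI2) by auto
lemma T_in5: "0<n \<Longrightarrow> (sg n 0 0, False, 1) \<in> T n"
  unfolding T_def apply (rule UnI2) by auto

definition Dset :: "nat \<Rightarrow> nat \<Rightarrow> nat set" where
  "Dset n m = insert 0 {sg n j 0 | j. j < m}"

definition Cset :: "nat \<Rightarrow> nat \<Rightarrow> nat set" where
  "Cset n j = (if j = 0 then {1} else Dset n j)"

definition nfa_of :: "nat \<Rightarrow> nat \<Rightarrow> nfa" where
  "nfa_of n f = \<lparr>states = {..<2+n*n}, init = Dset n n, fin = {f}, trans = T n\<rparr>"

lemma sg_eq_iff: "c < n \<Longrightarrow> c' < n \<Longrightarrow> sg n j c = sg n j' c' \<longleftrightarrow> (j = j' \<and> c = c')"
  using sg_inj by blast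

lemma sg_ne [simp]: "sg n j c \<noteq> 0" "sg n j c \<noteq> Suc 0" "0 \<noteq> sg n j c" "Suc 0 \<noteq> sg n j c"
  by (auto simp: sg_def)

lemma T_succ:
  assumes "j < n" "c \<le> j"
  shows "(sg n j c, a, p) \<in> T n \<longleftrightarrow> (a \<and> c < j \<and> p = sg n j (Suc c)) \<or> (\<not> a \<and> c < j \<and> p = sg n j 0)
     \<or> (\<not> a \<and> c = j \<and> p \<in> Cset n j)"
proof
  have cn: "c < n" using assms by simp
  assume "(sg n j c, a, p) \<in> T n"
  then consider
    (1) j' c' where "sg n j c = sg n j' c'" "a" "p = sg n j' (Suc c')" "j' < n" "c' < j'"
  | (2) j' c' where "sg n j c = sg n j' c'" "\<not>a" "p = sg n j' 0" "j' < n" "c' < j'"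
  | (3) j' j'' where "sg n j c = sg n j' j'" "\<not>a" "p = sg n j'' 0" "j' < n" "j'' < j'"
  | (4) j' where "sg n j c = sg n j' j'" "\<not>a" "p = 0" "0 < j'" "j' < n"
  | (5) "sg n j c = sg n 0 0" "\<not>a" "p = 1" "0 < n"
    unfolding T_def by (auto split: if_splits simp del: sg_eq_iff)
  then show "(a \<and> c < j \<and> p = sg n j (Suc c)) \<or> (\<not> a \<and> c < j \<and> p = sg n j 0)
     \<or> (\<not> a \<and> c = j \<and> p \<in> Cset n j)"
  proof cases
    case 1 then have "j = j' \<and> c = c'" using sg_inj cn by (metis less_trans)
    then show ?thesis using 1 by simp
  next
    case 2 then have "j = j' \<and> c = c'" using sg_inj cn by (metis less_trans)
    then show ?thesis using 2 by simp
  next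
    case 3 then have "j = j' \<and> c = j'" using sg_inj cn by (metis)
    then show ?thesis using 3 by (auto simp: Cset_def Dset_def)
  next
    case 4 then have "j = j' \<and> c = j'" using sg_inj cn by (metis)
    then show ?thesis using 4 by (auto simp: Cset_def Dset_def)
  next
    case 5 then have "j = 0 \<and> c = 0" using sg_inj cn by (metis)
    then show ?thesis using 5 by (auto simp: Cset_def Dset_def)
  qed
next
  assume "(a \<and> c < j \<and> p = sg n j (Suc c)) \<or> (\<not> a \<and> c < j \<and> p = sg n j 0)
     \<or> (\<not> a \<and> c = j \<and> p \<in> Cset n j)"
  then show "(sg n j c, a, p) \<in> T n"
  proof (elim disjE conjE)
    assume "a" "c < j" "p = sg n j (Suc c)"
    then show ?thesis using T_in1 assms by simp
  next
    assume "\<not>a" "c < j" "p = sg n j 0"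
    then show ?thesis using T_in2 assms by simp
  next
    assume h: "\<not>a" "c = j" "p \<in> Cset n j"
    show ?thesis
    proof (cases "j = 0")
      case True
      then have "p = 1" using h by (simp add: Cset_def)
      then show ?thesis using T_in5 assms h True by simp
    next
      case False
      then have "p = 0 \<or> (\<exists>j'. j' < j \<and> p = sg n j' 0)" using h by (auto simp: Cset_def Dset_def)
      then show ?thesis using T_in3 T_in4 h False assms by auto
    qed
  qed
qed

lemma T_src: "(q, a, p) \<in> T n \<Longrightarrow> \<exists>j c. q = sg n j c \<and> j < n \<and> c \<le> j"
  unfolding T_def by (auto split: if_splits simp del: sg_eq_iff) (metis less_imp_le)+

lemma sg_ge2: "sg n j c \<ge> 2" by (simp add: sg_def)

lemma acc_sg_Nil: "f \<le> 1 \<Longrightarrow> \<not> acc (nfa_of n f) (sg n j c) []"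
  unfolding acc_Nil nfa_of_def using sg_ge2[of n j c] by auto

lemma acc_01: "acc (nfa_of n f) 0 w \<longleftrightarrow> w = [] \<and> f = 0"
   "acc (nfa_of n f) 1 w \<longleftrightarrow> w = [] \<and> f = 1"
proof -
  have "\<And>q a p. q \<le> 1 \<Longrightarrow> (q,a,p) \<notin> T n"
  proof
    fix q a p assume "q \<le> 1" "(q,a,p) \<in> T n"
    then obtain j c where "q = sg n j c" using T_src by blast
    then show False using sg_ge2[of n j c] \<open>q \<le> 1\<close> by simp
  qed
  then show "acc (nfa_of n f) 0 w \<longleftrightarrow> w = [] \<and> f = 0"
   "acc (nfa_of n f) 1 w \<longleftrightarrow> w = [] \<and> f = 1"
    by (cases w; auto simp: acc_Cons acc_Nil nfa_of_def)+
qed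

lemma acc_1': "acc (nfa_of n f) (Suc 0) w \<longleftrightarrow> w = [] \<and> f = Suc 0"
  using acc_01(2) by simp

lemma acc_True: "j < n \<Longrightarrow> c \<le> j \<Longrightarrow>
  acc (nfa_of n f) (sg n j c) (True # w) \<longleftrightarrow> c < j \<and> acc (nfa_of n f) (sg n j (Suc c)) w"
  by (auto simp: acc_Cons T_succ) (auto simp: nfa_of_def T_succ)

lemma acc_False: "j < n \<Longrightarrow> c \<le> j \<Longrightarrow>
  acc (nfa_of n f) (sg n j c) (False # w) \<longleftrightarrow> (c < j \<and> acc (nfa_of n f) (sg n j 0) w)
     \<or> (c = j \<and> (\<exists>q\<in>Cset n j. acc (nfa_of n f) q w))"
  by (auto simp: acc_Cons nfa_of_def T_succ)

definition enc :: "nat list \<Rightarrow> bool list" where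
  "enc xs = concat (map (\<lambda>x. replicate x True @ [False]) xs)"

lemma enc_simps [simp]: "enc [] = []" "enc (x # xs) = replicate x True @ False # enc xs"
  "enc (xs @ ys) = enc xs @ enc ys"
  by (auto simp: enc_def)

lemma acc_ones: "j < n \<Longrightarrow> c + d \<le> j \<Longrightarrow> acc (nfa_of n f) (sg n j (c+d)) w \<Longrightarrow>
   acc (nfa_of n f) (sg n j c) (replicate d True @ w)"
proof (induction d arbitrary: c)
  case 0 then show ?case by simp
next
  case (Suc d)
  have h: "acc (nfa_of n f) (sg n j (Suc c)) (replicate d True @ w)"
    using Suc.IH[of "Suc c"] Suc.prems by simp
  have c: "c < j" "c \<le> j" using Suc.prems by auto
  have "replicate (Suc d) True @ w = True # (replicate d True @ w)" by simp
  then show ?case using acc_True[of j n c f "replicate d True @ w"] Suc.prems(1) c h by presburger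
qed

lemma v1: "\<not>a \<Longrightarrow> c = j \<Longrightarrow> w = enc ys \<Longrightarrow> replicate c True @ a # w = enc ([] @ [j] @ ys)" by simp
lemma v3: "\<not>a \<Longrightarrow> w = enc (xs @ [j] @ ys) \<Longrightarrow> replicate c True @ a # w = enc ((c # xs) @ [j] @ ys)" by simp

lemma acc_seg_fwd:
  assumes jn: "j < n" and f1: "f \<le> 1"
    and C: "\<And>w. (\<exists>q\<in>Cset n j. acc (nfa_of n f) q w) \<Longrightarrow> w \<in> enc ` E"
  shows "c \<le> j \<Longrightarrow> acc (nfa_of n f) (sg n j c) w \<Longrightarrow>
   replicate c True @ w \<in> enc ` {xs @ [j] @ ys | xs ys. set xs \<subseteq> {..<j} \<and> ys \<in> E}"
proof (induction w arbitrary: c)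
  case Nil then show ?case using acc_sg_Nil[OF f1, of n j c] by simp
next
  case (Cons a w)
  show ?case
  proof (cases a)
    case True
    have A: "acc (nfa_of n f) (sg n j c) (True # w)" using Cons.prems(2) True by simp
    have "c < j \<and> acc (nfa_of n f) (sg n j (Suc c)) w" using acc_True[OF jn Cons.prems(1)] A by blast
    then have "replicate (Suc c) True @ w \<in> enc ` {xs @ [j] @ ys | xs ys. set xs \<subseteq> {..<j} \<and> ys \<in> E}"
      using Cons.IH[of "Suc c"] by simp
    then show ?thesis using True by (simp add: replicate_app_Cons_same)
  next
    case False
    have A: "acc (nfa_of n f) (sg n j c) (False # w)" using Cons.prems(2) False by simp
    have "(c < j \<and> acc (nfa_of n f) (sg n j 0) w) \<or> (c = j \<and> (\<exists>q\<in>Cset n j. acc (nfa_of n f) q w))"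
      using acc_False[OF jn Cons.prems(1)] A by blast
    then show ?thesis
    proof
      assume h: "c < j \<and> acc (nfa_of n f) (sg n j 0) w"
      then have "w \<in> enc ` {xs @ [j] @ ys | xs ys. set xs \<subseteq> {..<j} \<and> ys \<in> E}"
        using Cons.IH[of 0] by auto
      then obtain xs ys where w: "w = enc (xs @ [j] @ ys)" "set xs \<subseteq> {..<j}" "ys \<in> E" by blast
      have eq: "replicate c True @ a # w = enc ((c # xs) @ [j] @ ys)" using v3[OF False w(1)] .
      have "set (c # xs) \<subseteq> {..<j}" using w(2) h[THEN conjunct1] by auto
      then have mem: "(c # xs) @ [j] @ ys \<in> {xs @ [j] @ ys | xs ys. set xs \<subseteq> {..<j} \<and> ys \<in> E}"
        using w(3) by (intro CollectI exI[of _ "c # xs"] exI[of _ ys]) simp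
      show ?thesis using image_eqI[where f=enc, OF eq mem] .
    next
      assume h: "c = j \<and> (\<exists>q\<in>Cset n j. acc (nfa_of n f) q w)"
      then obtain ys where wy: "w = enc ys" "ys \<in> E" using C[of w] by blast
      have cj: "c = j" using h by (rule conjunct1)
      have eq: "replicate c True @ a # w = enc ([] @ [j] @ ys)" using v1[OF False cj wy(1)] .
      have mem: "[] @ [j] @ ys \<in> {xs @ [j] @ ys | xs ys. set xs \<subseteq> {..<j} \<and> ys \<in> E}"
        using wy(2) by (intro CollectI exI[of _ "[]"] exI[of _ ys]) simp
      show ?thesis using image_eqI[where f=enc, OF eq mem] .
    qed
  qed
qed

lemma acc_seg_seg: "j < n \<Longrightarrow> set xs \<subseteq> {..<j} \<Longrightarrow> acc (nfa_of n f) (sg n j 0) w \<Longrightarrow>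
   acc (nfa_of n f) (sg n j 0) (enc xs @ w)"
proof (induction xs)
  case Nil then show ?case by simp
next
  case (Cons x xs)
  have "acc (nfa_of n f) (sg n j x) (False # enc xs @ w)"
    using Cons by (simp add: acc_False)
  then show ?case using acc_ones[of j n 0 x f "False # enc xs @ w"] Cons.prems by simp
qed

lemma acc_seg_bwd: "j < n \<Longrightarrow>
   (\<And>w. w \<in> enc ` E \<Longrightarrow> (\<exists>q\<in>Cset n j. acc (nfa_of n f) q w)) \<Longrightarrow>
   w \<in> enc ` {xs @ [j] @ ys | xs ys. set xs \<subseteq> {..<j} \<and> ys \<in> E} \<Longrightarrow>
   acc (nfa_of n f) (sg n j 0) w"
proof -
  assume j: "j < n" and C: "\<And>w. w \<in> enc ` E \<Longrightarrow> (\<exists>q\<in>Cset n j. acc (nfa_of n f) q w)"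
    and "w \<in> enc ` {xs @ [j] @ ys | xs ys. set xs \<subseteq> {..<j} \<and> ys \<in> E}"
  then obtain xs ys where w: "w = enc (xs @ [j] @ ys)" "set xs \<subseteq> {..<j}" "ys \<in> E" by blast
  have "acc (nfa_of n f) (sg n j j) (False # enc ys)"
    using C[of "enc ys"] w j by (simp add: acc_False)
  then have "acc (nfa_of n f) (sg n j 0) (enc [j] @ enc ys)"
    using acc_ones[of j n 0 j f "False # enc ys"] j by simp
  then show ?thesis using acc_seg_seg[OF j w(2)] w by simp
qed

fun Ml :: "nat \<Rightarrow> nat \<Rightarrow> nat list set" where
  "Ml f 0 = (if f = 0 then {[]} else {})"
| "Ml f (Suc j) = Ml f j \<union> {xs @ [j] @ ys | xs ys. set xs \<subseteq> {..<j} \<and>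
      ys \<in> (if j = 0 then (if f = 1 then {[]} else {}) else Ml f j)}"

definition Ef :: "nat \<Rightarrow> nat \<Rightarrow> nat list set" where
  "Ef f j = (if j = 0 then (if f = 1 then {[]} else {}) else Ml f j)"

lemma Ml_Suc': "Ml f (Suc j) = Ml f j \<union> {xs @ [j] @ ys | xs ys. set xs \<subseteq> {..<j} \<and> ys \<in> Ef f j}"
  by (simp add: Ef_def)

lemma Dset_Suc: "Dset n (Suc m) = insert (sg n m 0) (Dset n m)"
  unfolding Dset_def by (auto simp: less_Suc_eq)

lemma LangD: "m \<le> n \<Longrightarrow> f \<le> 1 \<Longrightarrow>
   (\<exists>q\<in>Dset n m. acc (nfa_of n f) q w) \<longleftrightarrow> w \<in> enc ` Ml f m"
proof (induction m arbitrary: w)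
  case 0
  then show ?case by (auto simp: Dset_def acc_01)
next
  case (Suc m)
  have C: "(\<exists>q\<in>Cset n m. acc (nfa_of n f) q w) \<longleftrightarrow> w \<in> enc ` Ef f m" for w
  proof (cases "m = 0")
    case True then show ?thesis by (auto simp: Cset_def Ef_def acc_01 acc_1')
  next
    case False then show ?thesis using Suc by (simp add: Cset_def Ef_def)
  qed
  have S: "acc (nfa_of n f) (sg n m 0) w \<longleftrightarrow>
     w \<in> enc ` {xs @ [m] @ ys | xs ys. set xs \<subseteq> {..<m} \<and> ys \<in> Ef f m}"
  proof
    assume "acc (nfa_of n f) (sg n m 0) w"
    then show "w \<in> enc ` {xs @ [m] @ ys | xs ys. set xs \<subseteq> {..<m} \<and> ys \<in> Ef f m}"
      using acc_seg_fwd[of m n f "Ef f m" 0 w] C Suc.prems by auto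
  next
    assume "w \<in> enc ` {xs @ [m] @ ys | xs ys. set xs \<subseteq> {..<m} \<and> ys \<in> Ef f m}"
    then show "acc (nfa_of n f) (sg n m 0) w"
      using acc_seg_bwd[of m n "Ef f m" f w] C Suc.prems by auto
  qed
  show ?case unfolding Dset_Suc Ml_Suc' image_Un using S Suc by auto
qed

lemma lang_nfa_of: "f \<le> 1 \<Longrightarrow> lang (nfa_of n f) = enc ` Ml f n"
  using LangD[of n n f] by (auto simp: lang_acc nfa_of_def)

lemma Ml_disj: "(v \<in> Ml 0 n \<longrightarrow> v = [] \<or> last v \<noteq> 0) \<and> (v \<in> Ml 1 n \<longrightarrow> v \<noteq> [] \<and> last v = 0)"
proof (induction n arbitrary: v)
  case 0 then show ?case by simp
next
  case (Suc n)
  show ?case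
  proof (rule conjI; rule impI)
    assume "v \<in> Ml 0 (Suc n)"
    then show "v = [] \<or> last v \<noteq> 0" using Suc[of v] Suc by (auto split: if_splits) force+
  next
    assume "v \<in> Ml 1 (Suc n)"
    then show "v \<noteq> [] \<and> last v = 0" using Suc[of v] Suc by (auto split: if_splits)
  qed
qed

lemma Ml_disjoint: "Ml 0 n \<inter> Ml 1 n = {}"
  using Ml_disj by blast

lemma enc_prefix_aux: "prefix (replicate x True @ False # a) (replicate y True @ False # b) \<Longrightarrow> x = y \<and> prefix a b"
proof (induction x arbitrary: y)
  case 0 then show ?case by (cases y) auto
next
  case (Suc x) then show ?case by (cases y) auto
qed

lemma enc_prefix: "prefix (enc xs) (enc ys) \<Longrightarrow> prefix xs ys"
proof (induction xs arbitrary: ys)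
  case Nil then show ?case by simp
next
  case (Cons x xs)
  then obtain y ys' where ys: "ys = y # ys'" by (cases ys) auto
  then show ?case using Cons enc_prefix_aux[of x "enc xs" y "enc ys'"] by simp
qed

lemma enc_inj: "enc xs = enc ys \<Longrightarrow> xs = ys"
  using enc_prefix by (metis prefix_order.antisym prefix_order.refl)

fun W :: "nat \<Rightarrow> nat list set" where
  "W 0 = {[]}"
| "W (Suc n) = W n \<union> {xs @ [n] @ ys | xs ys. set xs \<subseteq> {..<n} \<and> ys \<in> W n}"

lemma Ml_W: "Ml f n \<subseteq> W n"
  by (induction n) (auto split: if_splits)

lemma W_set: "v \<in> W n \<Longrightarrow> set v \<subseteq> {..<n}"
proof (induction n arbitrary: v)
  case 0 then show ?case by simp
next
  case (Suc n)
  then show ?case using Suc.IH by (fastforce simp: less_Suc_eq)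
qed

lemma tw_help: "n \<notin> set xs \<Longrightarrow> takeWhile (\<lambda>x. x \<noteq> n) (xs @ n # r) = xs"
  by (induction xs) auto

lemma tw_eq: "n \<notin> set xs \<Longrightarrow> n \<notin> set xs' \<Longrightarrow> prefix (xs @ [n] @ ys) (xs' @ [n] @ ys') \<Longrightarrow> xs = xs'"
proof -
  assume a: "n \<notin> set xs" "n \<notin> set xs'" "prefix (xs @ [n] @ ys) (xs' @ [n] @ ys')"
  then obtain z where z: "xs' @ [n] @ ys' = xs @ [n] @ ys @ z" by (auto simp: prefix_def)
  have "takeWhile (\<lambda>x. x \<noteq> n) (xs' @ [n] @ ys') = xs'" using a tw_help by simp
  moreover have "takeWhile (\<lambda>x. x \<noteq> n) (xs @ [n] @ ys @ z) = xs" using a tw_help by simp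
  ultimately show ?thesis using z by simp
qed

lemma W_branch: "(\<forall>i. v i \<in> W n) \<Longrightarrow> (\<forall>i. strict_prefix (v i) (v (Suc i))) \<Longrightarrow> False"
proof (induction n arbitrary: v)
  case 0
  then have "v 0 = []" "v 1 = []" by auto
  then show ?case using "0.prems"(2)[rule_format, of 0] by simp
next
  case (Suc n)
  note hv = Suc.prems(1) and hs = Suc.prems(2)
  show ?case
  proof (cases "\<forall>i. v i \<in> W n")
    case True then show ?thesis using Suc by blast
  next
    case False
    then obtain k where k: "v k \<notin> W n" by blast
    then obtain xs ys where xy: "v k = xs @ [n] @ ys" "set xs \<subseteq> {..<n}" "ys \<in> W n"
      using hv by auto
    have pre: "prefix (v k) (v (k + i))" for i
    proof (induction i)
      case 0 then show ?case by simp
    next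
      case (Suc i)
      then show ?case using hs[rule_format, of "k+i"]
        by (metis add_Suc_right prefix_order.dual_order.trans prefix_order.less_imp_le)
    qed
    have "\<exists>y. v (k+i) = xs @ [n] @ y \<and> y \<in> W n" for i
    proof -
      have nin: "n \<in> set (v (k+i))" using pre[of i] xy by (auto dest: set_mono_prefix)
      have "v (k+i) \<in> W (Suc n)" using hv by blast
      moreover have "v (k+i) \<notin> W n" using nin W_set by blast
      ultimately obtain xs' ys' where xy': "v (k+i) = xs' @ [n] @ ys'" "set xs' \<subseteq> {..<n}" "ys' \<in> W n"
        by auto
      have "xs = xs'" using tw_eq[of n xs xs' ys ys'] xy xy' pre[of i] by auto
      then show ?thesis using xy' by blast
    qed
    then obtain u where u: "\<And>i. v (k+i) = xs @ [n] @ u i \<and> u i \<in> W n" by metis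
    have "strict_prefix (u i) (u (Suc i))" for i
    proof -
      have "strict_prefix (v (k+i)) (v (Suc (k+i)))" using hs by blast
      then have "strict_prefix (xs @ [n] @ u i) (xs @ [n] @ u (Suc i))" using u[of i] u[of "Suc i"] by simp
      then show ?thesis by (simp add: strict_prefix_def)
    qed
    then show False using Suc.IH[of u] u by blast
  qed
qed

fun R :: "nat \<Rightarrow> nat list" where
  "R 0 = []"
| "R (Suc n) = R n @ [n] @ R n"

lemma R_len: "length (R n) + 1 = 2 ^ n"
  by (induction n) auto

lemma R_set: "set (R n) \<subseteq> {..<n}"
  by (induction n) auto

lemma R_take: "i \<le> length (R n) \<Longrightarrow> take i (R n) \<in> Ml (i mod 2) n"
proof (induction n arbitrary: i)
  case 0 then show ?case by simp
next
  case (Suc n)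
  show ?case
  proof (cases "i \<le> length (R n)")
    case True
    then show ?thesis using Suc.IH[of i] by simp
  next
    case False
    define k where "k = i - length (R n) - 1"
    have ik: "i = length (R n) + 1 + k" "k \<le> length (R n)" using False Suc.prems by (auto simp: k_def)
    have t: "take i (R (Suc n)) = R n @ [n] @ take k (R n)" using ik by simp
    have "take k (R n) \<in> Ef (i mod 2) n"
    proof (cases "n = 0")
      case True then show ?thesis using ik by (simp add: Ef_def)
    next
      case False
      have "even (length (R n) + 1)" using R_len[of n] False by (simp add: ik)
      then have "i mod 2 = k mod 2" using ik by presburger
      then show ?thesis using Suc.IH[of k] ik False by (simp add: Ef_def)
    qed
    then show ?thesis unfolding Ml_Suc' t using R_set[of n]
      by (intro UnI2 CollectI exI[of _ "R n"] exI[of _ "take k (R n)"]) simp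
  qed
qed


lemma pow_sq: "4 \<le> t \<Longrightarrow> t*t \<le> (2::nat)^t"
proof (induction t rule: dec_induct)
  case base then show ?case by simp
next
  case (step t)
  have "Suc t * Suc t = t*t + 2*t + 1" by simp
  also have "\<dots> \<le> t*t + t*t"
  proof -
    have "4*t \<le> t*t" using mult_le_mono1[of 4 t t] step(1) by simp
    moreover have "\<And>x::nat. 4*t \<le> x \<Longrightarrow> 4 \<le> t \<Longrightarrow> x + 2*t + 1 \<le> x + x" by linarith
    ultimately show ?thesis using step(1) by blast
  qed
  also have "\<dots> \<le> 2^Suc t" using step by simp
  finally show ?case .
qed
lemma superpoly: "\<exists>n::nat. c * (2*(2+n*n))^k < (2::nat)^n"
proof -
  define t where "t = c + 3*k + 4"
  define n where "n = (2::nat)^t"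
  have t4: "4 \<le> t" by (simp add: t_def)
  have a: "c + (2*t+3)*k \<le> t*t"
  proof -
    have "t*t = t*c + t*(3*k) + t*4" by (simp add: t_def algebra_simps)
    moreover have "c \<le> t*c" using t4 by simp
    moreover have "(2*t+3)*k \<le> t*(3*k)"
    proof -
      have "(2*t+3)*k = 2*t*k + 3*k" by (simp add: algebra_simps)
      moreover have "3*k \<le> t*k" using t4 by simp
      ultimately show ?thesis by (simp add: algebra_simps)
    qed
    ultimately show ?thesis by linarith
  qed
  have b: "2*(2+n*n) \<le> 2^(2*t+3)"
  proof -
    have nn: "n*n = 2^(2*t)" by (simp add: n_def power_add[symmetric] mult_2)
    have "1 \<le> n*n" by (simp add: nn)
    moreover have "\<And>x::nat. 1 \<le> x \<Longrightarrow> 2*(2+x) \<le> 8*x" by presburger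
    ultimately have "2*(2+n*n) \<le> 8*(n*n)" by blast
    also have "\<dots> = 2^(2*t+3)" by (simp add: nn power_add)
    finally show ?thesis .
  qed
  have "c * (2*(2+n*n))^k \<le> c * (2^(2*t+3))^k"
    using b by (simp add: power_mono)
  also have "\<dots> = c * 2^((2*t+3)*k)" by (simp add: power_mult)
  also have "\<dots> < 2^c * 2^((2*t+3)*k)" using less_exp[of c] by simp
  also have "\<dots> = 2^(c + (2*t+3)*k)" by (simp add: power_add)
  also have "\<dots> \<le> 2^(t*t)" using a by (simp add: power_increasing)
  also have "\<dots> \<le> 2^n" using pow_sq[OF t4] by (simp add: n_def power_increasing)
  finally show ?thesis by blast
qed

lemma sg_lt: "j < n \<Longrightarrow> c < n \<Longrightarrow> sg n j c < 2 + n*n"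
proof -
  assume "j < n" "c < n"
  have "(j+1)*n \<le> n*n" using mult_le_mono1[of "j+1" n n] \<open>j < n\<close> by simp
  then have "j*n + c < n*n" using \<open>c < n\<close> by simp
  then show ?thesis by (simp add: sg_def)
qed

lemma sg_lt': "j < n \<Longrightarrow> c < n \<Longrightarrow> sg n j c < Suc (Suc (n*n))"
  using sg_lt by simp

lemma T_bound: "(q,a,p) \<in> T n \<Longrightarrow> q < 2 + n*n \<and> p < 2 + n*n"
proof -
  assume h: "(q,a,p) \<in> T n"
  have n0: "0 < n" using h T_src by fastforce
  have l01: "(0::nat) < 2 + n*n" "(1::nat) < 2 + n*n" by auto
  show ?thesis using h unfolding T_def
    by (auto split: if_splits intro!: sg_lt' simp del: sg_eq_iff)
qed

lemma wf_nfa_of: "f \<le> 1 \<Longrightarrow> wf_nfa (nfa_of n f)"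
  unfolding wf_nfa_def nfa_of_def
proof (intro conjI)
  show "init \<lparr>states = {..<2 + n * n}, init = Dset n n, fin = {f}, trans = T n\<rparr>
    \<subseteq> states \<lparr>states = {..<2 + n * n}, init = Dset n n, fin = {f}, trans = T n\<rparr>"
    using sg_lt by (auto simp: Dset_def)
  show "trans \<lparr>states = {..<2 + n * n}, init = Dset n n, fin = {f}, trans = T n\<rparr>
    \<subseteq> states \<lparr>states = {..<2 + n * n}, init = Dset n n, fin = {f}, trans = T n\<rparr> \<times> UNIV \<times>
       states \<lparr>states = {..<2 + n * n}, init = Dset n n, fin = {f}, trans = T n\<rparr>"
    using T_bound by fastforce
qed auto

lemma card_nfa_of: "card (states (nfa_of n f)) = 2 + n*n"
  by (simp add: nfa_of_def)

lemma langs_disj: "lang (nfa_of n 0) \<inter> lang (nfa_of n 1) = {}"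
proof -
  have "enc ` Ml 0 n \<inter> enc ` Ml 1 n = {}"
    using Ml_disjoint[of n] enc_inj by blast
  then show ?thesis using lang_nfa_of[of 0 n] lang_nfa_of[of 1 n] by simp
qed

lemma no_inf: "\<not> (\<exists>w. infinite_tower (lang (nfa_of n 0)) (lang (nfa_of n 1)) w)"
proof
  assume "\<exists>w. infinite_tower (lang (nfa_of n 0)) (lang (nfa_of n 1)) w"
  then obtain w where w: "infinite_tower (lang (nfa_of n 0)) (lang (nfa_of n 1)) w" by blast
  define K where "K = lang (nfa_of n 0)"
  define L where "L = lang (nfa_of n 1)"
  have KL: "K \<inter> L = {}" using langs_disj by (simp add: K_def L_def)
  have w0: "w 0 \<in> K \<union> L" and ws: "\<And>i. prefix (w i) (w (Suc i)) \<and> (w i \<in> K \<longrightarrow> w (Suc i) \<in> L) \<and>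
        (w i \<in> L \<longrightarrow> w (Suc i) \<in> K)"
    using w unfolding infinite_tower_def K_def L_def by blast+
  have inKL: "w i \<in> K \<union> L" for i
    by (induction i) (use w0 ws in blast)+
  have neq: "w i \<noteq> w (Suc i)" for i
    using inKL[of i] ws[of i] KL by auto
  have "\<forall>i. \<exists>x. w i = enc x \<and> x \<in> W n"
  proof
    fix i
    have "w i \<in> enc ` Ml 0 n \<union> enc ` Ml 1 n"
      using inKL[of i] lang_nfa_of[of 0 n] lang_nfa_of[of 1 n] by (simp add: K_def L_def)
    then show "\<exists>x. w i = enc x \<and> x \<in> W n" using Ml_W by blast
  qed
  then obtain v where v: "\<And>i. w i = enc (v i) \<and> v i \<in> W n" by metis
  have "strict_prefix (v i) (v (Suc i))" for i
  proof -
    have "prefix (v i) (v (Suc i))" using ws[of i] v[of i] v[of "Suc i"] enc_prefix by metis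
    moreover have "v i \<noteq> v (Suc i)" using neq[of i] v[of i] v[of "Suc i"] by metis
    ultimately show ?thesis by (simp add: strict_prefix_def)
  qed
  then show False using W_branch[of v n] v by blast
qed

lemma enc_prefix_mono: "prefix a b \<Longrightarrow> prefix (enc a) (enc b)"
  by (auto simp: prefix_def)

lemma tower_mem: "i < 2^n \<Longrightarrow> enc (take i (R n)) \<in> lang (nfa_of n (i mod 2))"
proof -
  assume "i < 2^n"
  then have "i \<le> length (R n)" using R_len[of n] by simp
  then have "take i (R n) \<in> Ml (i mod 2) n" by (rule R_take)
  moreover have "i mod 2 \<le> 1" by simp
  ultimately show ?thesis using lang_nfa_of[of "i mod 2" n] by simp
qed

lemma tower_ex: "\<exists>ws. tower (lang (nfa_of n 0)) (lang (nfa_of n 1)) ws \<and> length ws = 2^n"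
proof -
  define ws where "ws = map (\<lambda>i. enc (take i (R n))) [0..<2^n]"
  define K where "K = lang (nfa_of n 0)"
  define L where "L = lang (nfa_of n 1)"
  have KL: "K \<inter> L = {}" using langs_disj by (simp add: K_def L_def)
  have len: "length ws = 2^n" by (simp add: ws_def)
  have nth: "i < 2^n \<Longrightarrow> ws ! i = enc (take i (R n))" for i by (simp add: ws_def)
  have mem: "i < 2^n \<Longrightarrow> ws ! i \<in> (if even i then K else L)" for i
    using tower_mem[of i n] nth[of i] by (auto simp: K_def L_def even_iff_mod_2_eq_zero odd_iff_mod_2_eq_one)
  have "tower K L ws"
    unfolding tower_def
  proof (intro conjI allI impI)
    show "ws \<noteq> []" using len by auto
    have ne: "ws \<noteq> []" using len by auto
    have "hd ws = ws ! 0" using hd_conv_nth[OF ne] .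
    then show "hd ws \<in> K \<union> L" using mem[of 0] by simp
  next
    fix i assume i: "Suc i < length ws"
    then have i1: "i < 2^n" "Suc i < 2^n" using len by auto
    show "prefix (ws ! i) (ws ! Suc i)"
    proof -
      have "prefix (take i (R n)) (take (Suc i) (R n))"
        by (metis le_SucI order_refl take_is_prefix take_take min_absorb1 le_Suc_eq)
      then show ?thesis using nth i1 enc_prefix_mono by simp
    qed
    show "ws ! i \<in> K \<Longrightarrow> ws ! Suc i \<in> L"
    proof -
      assume a: "ws ! i \<in> K"
      have "even i" proof (rule ccontr)
        assume "odd i" then have "ws ! i \<in> L" using mem[OF i1(1)] by simp
        then show False using a KL by blast
      qed
      then show ?thesis using mem[OF i1(2)] by simp
    qed
    show "ws ! i \<in> L \<Longrightarrow> ws ! Suc i \<in> K"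
    proof -
      assume a: "ws ! i \<in> L"
      have "odd i" proof (rule ccontr)
        assume "\<not> odd i" then have "ws ! i \<in> K" using mem[OF i1(1)] by simp
        then show False using a KL by blast
      qed
      then show ?thesis using mem[OF i1(2)] by simp
    qed
  qed
  then show ?thesis using len by (auto simp: K_def L_def)
qed

theorem corollary17:
  "\<exists>P :: (nat \<times> nat) set. \<exists>h :: nat \<times> nat \<Rightarrow> nat.
     infinite P \<and>
     (\<forall>(n1, n2) \<in> P. 0 < n1 \<and> 0 < n2 \<and>
        (\<exists>A B. wf_nfa A \<and> wf_nfa B \<and> card (states A) = n1 \<and> card (states B) = n2 \<and>
           \<not> (\<exists>w. infinite_tower (lang A) (lang B) w) \<and>
           (\<exists>ws. tower (lang A) (lang B) ws \<and> length ws = h (n1, n2)))) \<and>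
     (\<forall>(c::nat) (k::nat). \<exists>(n1, n2) \<in> P. h (n1, n2) > c * (n1 + n2) ^ k)"
proof -
  define g where "g = (\<lambda>n::nat. 2 + n*n)"
  have gsm: "strict_mono g" unfolding g_def strict_mono_Suc_iff by simp
  then have ginj: "inj g" by (rule strict_mono_imp_inj_on)
  define P where "P = (\<lambda>n. (g n, g n)) ` UNIV"
  define h where "h = (\<lambda>p::nat\<times>nat. (2::nat) ^ (inv g (fst p)))"
  have hg: "h (g n, g n) = 2^n" for n by (simp add: h_def ginj)
  have "inj (\<lambda>n. (g n, g n))" using ginj by (auto simp: inj_on_def)
  then have inf: "infinite P" unfolding P_def using finite_imageD by blast
  have per: "0 < g n \<and> 0 < g n \<and>
        (\<exists>A B. wf_nfa A \<and> wf_nfa B \<and> card (states A) = g n \<and> card (states B) = g n \<and>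
           \<not> (\<exists>w. infinite_tower (lang A) (lang B) w) \<and>
           (\<exists>ws. tower (lang A) (lang B) ws \<and> length ws = h (g n, g n)))" for n
  proof -
    have "wf_nfa (nfa_of n 0)" "wf_nfa (nfa_of n 1)" by (auto intro: wf_nfa_of)
    moreover have "card (states (nfa_of n 0)) = g n" "card (states (nfa_of n 1)) = g n"
      by (simp_all add: card_nfa_of g_def)
    ultimately show ?thesis using no_inf[of n] tower_ex[of n] hg[of n] by (auto simp: g_def)
  qed
  have sp: "\<exists>(n1, n2) \<in> P. h (n1, n2) > c * (n1 + n2) ^ k" for c k
  proof -
    obtain n where "c * (2*(2+n*n))^k < (2::nat)^n" using superpoly by blast
    then have "h (g n, g n) > c * (g n + g n)^k" using hg[of n] by (simp add: g_def mult_2)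
    then show ?thesis unfolding P_def by blast
  qed
  show ?thesis
    apply (rule exI[of _ P], rule exI[of _ h])
    using inf per sp unfolding P_def by auto
qed

end
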